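(* Let $\hat\phi_{\mathrm{CS}}(\cdot)=\mathbb{1}(s(\cdot)>t_{\mathrm{CS}})$ be a given classifier, where the scoring function $s:\mathcal{X}\to\mathbb{R}$ and threshold $t_{\mathrm{CS}}$ are regarded as fixed. Let $F$ be the cumulative distribution function of $s(X^0)$, where $X^0\sim X\mid(Y=0)$. Apply $s$ to a left-out class-0 sample of size $m$ (independent of $s$ and $t_{\mathrm{CS}}$), giving scores $T_1,\dots,T_m$, with $k$-th order statistic $T_{(k)}$. If $T_{(1)}\le t_{\mathrm{CS}}$, let $k_s^*=\max\{k\in\{1,\dots,m\}:T_{(k)}\le t_{\mathrm{CS}}\}$ and define the surrogate classifier $\hat\phi_{k_s^*}(\cdot)=\mathbb{1}(s(\cdot)>T_{(k_s^* )})$. Then $R_0(\hat\phi_{k_s^*})\ge R_0(\hat\phi_{\mathrm{CS}})$, and for $\alpha\in(0,1)$, $$\mathbb{P}_m\big(R_0(\hat\phi_{k_s^*})>\alpha\big)\begin{cases}=1 & \text{if } t_{\mathrm{CS}}<F^{-1}(1-\alpha),\\ \le (2-\alpha-F(t_{\mathrm{CS}}))^m-(1-F(t_{\mathrm{CS}}))^m & \text{if } t_{\mathrm{CS}}\ge F^{-1}(1-\alpha),\end{cases}$$ where $\mathbb{P}_m$ is the probability with respect to the randomness of the left-out class-0 sample of size $m$.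
   Context: $(X,Y)$ is a random pair with $X\in\mathcal{X}\subset\mathbb{R}^d$ and $Y\in\{0,1\}$. For a classifier $\phi:\mathcal{X}\to\{0,1\}$, $R_0(\phi)=\mathbb{P}(\phi(X)=1\mid Y=0)$ is the population type I error (for a classifier depending on the left-out sample, this probability is over an independent new $X$ given $Y=0$, with the sample held fixed). The left-out scores $T_1,\dots,T_m$ are i.i.d. with distribution function $F$. *)

theory Defs
  imports "HOL-Probability.Probability"
begin

definition thresh_classifier :: "('a \<Rightarrow> real) \<Rightarrow> real \<Rightarrow> 'a \<Rightarrow> nat" where
  "thresh_classifier s t = (\<lambda>x. if s x > t then 1 else 0)"

text \<open>Population type I error R_0(phi) = P(phi(X) = 1 | Y = 0), where P0 is the
  law of X given Y = 0.\<close>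
definition R0 :: "'a measure \<Rightarrow> ('a \<Rightarrow> nat) \<Rightarrow> real" where
  "R0 P0 phi = measure P0 {x \<in> space P0. phi x = 1}"

definition order_stat :: "(nat \<Rightarrow> real) \<Rightarrow> nat \<Rightarrow> nat \<Rightarrow> real" where
  "order_stat T m k = sort (map T [0..<m]) ! (k - 1)"

definition kstar :: "(nat \<Rightarrow> real) \<Rightarrow> nat \<Rightarrow> real \<Rightarrow> nat" where
  "kstar T m t = Max {k \<in> {1..m}. order_stat T m k \<le> t}"

definition gen_inv :: "(real \<Rightarrow> real) \<Rightarrow> real \<Rightarrow> real" where
  "gen_inv F p = Inf {x. p \<le> F x}"

end

theory Submission
  imports Defs
begin

definition cdfo :: "'a measure \<Rightarrow> ('a \<Rightarrow> real) \<Rightarrow> real \<Rightarrow> real" where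
  "cdfo P0 s x = measure P0 {z \<in> space P0. s z \<le> x}"

lemma os_props:
  fixes T :: "nat \<Rightarrow> real"
  shows "length (sort (map T [0..<m])) = m" "sorted (sort (map T [0..<m]))"
    "set (sort (map T [0..<m])) = T ` {..<m}"
  by auto

lemma os1:
  fixes T :: "nat \<Rightarrow> real"
  assumes "m \<ge> 1"
  shows "order_stat T m 1 \<le> t \<longleftrightarrow> (\<exists>i<m. T i \<le> t)"
proof -
  let ?xs = "sort (map T [0..<m])"
  have o: "order_stat T m 1 = ?xs ! 0" by (simp add: order_stat_def)
  show ?thesis
  proof
    assume "order_stat T m 1 \<le> t"
    moreover have "?xs ! 0 \<in> set ?xs" using assms os_props(1)[of T m] by (intro nth_mem) auto
    ultimately show "\<exists>i<m. T i \<le> t" using o os_props(3)[of T m] by auto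
  next
    assume "\<exists>i<m. T i \<le> t"
    then obtain i where i: "i < m" "T i \<le> t" by auto
    then have "T i \<in> set ?xs" using os_props(3)[of T m] by auto
    then obtain j where j: "j < length ?xs" "?xs ! j = T i" by (metis in_set_conv_nth)
    have "?xs ! 0 \<le> ?xs ! j" using j by (intro sorted_nth_mono) auto
    then show "order_stat T m 1 \<le> t" using o i j by auto
  qed
qed

lemma oskstar:
  fixes T :: "nat \<Rightarrow> real"
  assumes "m \<ge> 1" "order_stat T m 1 \<le> t"
  shows "order_stat T m (kstar T m t) \<le> t"
    "\<exists>i<m. T i = order_stat T m (kstar T m t)"
    "\<forall>i<m. T i \<le> t \<longrightarrow> T i \<le> order_stat T m (kstar T m t)"
proof -
  let ?xs = "sort (map T [0..<m])"
  define K where "K = {k \<in> {1..m}. order_stat T m k \<le> t}"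
  have fin: "finite K" unfolding K_def by auto
  have "1 \<in> K" using assms unfolding K_def by auto
  then have kK: "kstar T m t \<in> K" unfolding kstar_def K_def[symmetric] using fin by (intro Max_in) auto
  then have k: "1 \<le> kstar T m t" "kstar T m t \<le> m" "order_stat T m (kstar T m t) \<le> t"
    unfolding K_def by auto
  show "order_stat T m (kstar T m t) \<le> t" using k by auto
  have "?xs ! (kstar T m t - 1) \<in> set ?xs" using k os_props(1)[of T m] by (intro nth_mem) auto
  then show "\<exists>i<m. T i = order_stat T m (kstar T m t)"
    using os_props(3)[of T m] unfolding order_stat_def by auto
  show "\<forall>i<m. T i \<le> t \<longrightarrow> T i \<le> order_stat T m (kstar T m t)"
  proof (intro allI impI)
    fix i assume i: "i < m" "T i \<le> t"
    then have "T i \<in> set ?xs" using os_props(3)[of T m] by auto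
    then obtain j where j: "j < length ?xs" "?xs ! j = T i" by (metis in_set_conv_nth)
    have jm: "j < m" using j os_props(1)[of T m] by simp
    have "Suc j \<in> K" unfolding K_def order_stat_def using jm j i by auto
    then have "Suc j \<le> kstar T m t" unfolding kstar_def K_def[symmetric] using fin by (intro Max_ge) auto
    then have "?xs ! j \<le> ?xs ! (kstar T m t - 1)" using k os_props(1)[of T m]
      by (intro sorted_nth_mono) auto
    then show "T i \<le> order_stat T m (kstar T m t)" using j unfolding order_stat_def by simp
  qed
qed

context
  fixes P0 :: "'a measure" and s :: "'a \<Rightarrow> real"
  assumes P: "prob_space P0" and sm: "s \<in> borel_measurable P0"
begin

interpretation prob_space P0 by (rule P)

lemma setle[measurable]: "{z \<in> space P0. s z \<le> x} \<in> sets P0"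
  using sm by measurable

lemma setgt[measurable]: "{z \<in> space P0. x < s z} \<in> sets P0"
  using sm by measurable

lemma cdfo_mono: "x \<le> y \<Longrightarrow> cdfo P0 s x \<le> cdfo P0 s y"
  unfolding cdfo_def by (intro finite_measure_mono) auto

lemma R0_thresh: "R0 P0 (thresh_classifier s c) = 1 - cdfo P0 s c"
proof -
  have "{x \<in> space P0. thresh_classifier s c x = 1} = space P0 - {z \<in> space P0. s z \<le> c}"
    by (auto simp: thresh_classifier_def)
  then show ?thesis unfolding R0_def cdfo_def using prob_compl[OF setle] by simp
qed

lemma cdfo_bot: "\<exists>b. cdfo P0 s b < u" if "0 < u"
proof -
  define A where "A n = {z \<in> space P0. s z \<le> - real n}" for n
  have "(\<lambda>n. measure P0 (A n)) \<longlonglongrightarrow> measure P0 (\<Inter>n. A n)"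
    by (intro finite_Lim_measure_decseq) (auto simp: A_def decseq_def)
  moreover have "(\<Inter>n. A n) = {}"
  proof -
    have "x \<notin> (\<Inter>n. A n)" for x
    proof
      assume h: "x \<in> (\<Inter>n. A n)"
      obtain n where n: "- s x \<le> real n" using real_arch_simple by blast
      from h have "x \<in> A (Suc n)" by blast
      then show False using n by (simp add: A_def)
    qed
    then show ?thesis by blast
  qed
  ultimately have "(\<lambda>n. measure P0 (A n)) \<longlonglongrightarrow> 0" by simp
  then have "eventually (\<lambda>n. measure P0 (A n) < u) sequentially" using that
    by (rule order_tendstoD(2))
  then obtain n where "measure P0 (A n) < u" by (auto simp: eventually_sequentially)
  then show ?thesis unfolding A_def cdfo_def by blast
qed

lemma cdfo_top: "\<exists>b. cdfo P0 s b > u" if "u < 1"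
proof -
  define A where "A n = {z \<in> space P0. s z \<le> real n}" for n
  have "(\<lambda>n. measure P0 (A n)) \<longlonglongrightarrow> measure P0 (\<Union>n. A n)"
    by (intro finite_Lim_measure_incseq) (auto simp: A_def incseq_def)
  moreover have "(\<Union>n. A n) = space P0"
    by (auto simp: A_def) (meson real_arch_simple)
  ultimately have "(\<lambda>n. measure P0 (A n)) \<longlonglongrightarrow> 1" using prob_space by simp
  then have "eventually (\<lambda>n. measure P0 (A n) > u) sequentially" using that
    by (rule order_tendstoD(1))
  then obtain n where "measure P0 (A n) > u" by (auto simp: eventually_sequentially)
  then show ?thesis unfolding A_def cdfo_def by blast
qed


lemma cdfo_meas[measurable]: "(\<lambda>x. cdfo P0 s (s x)) \<in> borel_measurable P0"
proof -
  have "cdfo P0 s \<in> borel_measurable borel"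
    by (intro borel_measurable_mono) (auto simp: mono_def cdfo_mono)
  then show ?thesis using sm by (rule measurable_compose[rotated])
qed

lemma gen_inv_lt:
  assumes "t < gen_inv (cdfo P0 s) u" "0 < u"
  shows "cdfo P0 s t < u"
proof (rule ccontr)
  assume "\<not> cdfo P0 s t < u"
  then have tS: "t \<in> {x. u \<le> cdfo P0 s x}" by simp
  obtain b where b: "cdfo P0 s b < u" using cdfo_bot assms(2) by blast
  have "bdd_below {x. u \<le> cdfo P0 s x}"
  proof (rule bdd_belowI)
    fix x assume "x \<in> {x. u \<le> cdfo P0 s x}"
    then show "b \<le> x" using b cdfo_mono[of x b] by force
  qed
  then have "gen_inv (cdfo P0 s) u \<le> t" unfolding gen_inv_def using tS by (rule cInf_lower[rotated])
  then show False using assms(1) by simp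
qed

lemma prob_F_lt:
  assumes "0 < u" "u < 1"
  shows "measure P0 {x \<in> space P0. cdfo P0 s (s x) < u} \<le> u"
proof -
  define S where "S = {x. cdfo P0 s x < u}"
  define E where "E = {x \<in> space P0. cdfo P0 s (s x) < u}"
  have down: "y \<in> S" if "x \<in> S" "y \<le> x" for x y
    using that cdfo_mono[of y x] unfolding S_def by auto
  show ?thesis
  proof (cases "S = {}")
    case True
    then have "E = {}" unfolding E_def S_def by auto
    then show ?thesis using assms unfolding E_def by (simp del: Collect_empty_eq)
  next
    case False
    obtain b where b: "cdfo P0 s b > u" using cdfo_top assms(2) by blast
    have bdd: "bdd_above S"
    proof (rule bdd_aboveI)
      fix x assume "x \<in> S"
      then show "x \<le> b" using b cdfo_mono[of b x] unfolding S_def by force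
    qed
    define c where "c = Sup S"
    have up: "x \<le> c" if "x \<in> S" for x using that bdd unfolding c_def by (intro cSup_upper)
    show ?thesis
    proof (cases "c \<in> S")
      case True
      have iff: "cdfo P0 s (s x) < u \<longleftrightarrow> s x \<le> c" for x
      proof
        assume "cdfo P0 s (s x) < u"
        then have "s x \<in> S" by (simp add: S_def)
        then show "s x \<le> c" by (rule up)
      next
        assume "s x \<le> c"
        with True have "s x \<in> S" by (rule down)
        then show "cdfo P0 s (s x) < u" by (simp add: S_def)
      qed
      have "E = {x \<in> space P0. s x \<le> c}"
        unfolding E_def using iff by blast
      then have "measure P0 E = cdfo P0 s c" unfolding cdfo_def by simp
      then show ?thesis using True unfolding S_def E_def by simp
    next
      case cS: False
      define A where "A n = {z \<in> space P0. s z \<le> c - 1 / real (Suc n)}" for n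
      have inS: "c - 1 / real (Suc n) \<in> S" for n
      proof -
        have "c - 1 / real (Suc n) < Sup S" unfolding c_def[symmetric] by simp
        then obtain y where "y \<in> S" "c - 1 / real (Suc n) < y"
          using False by (meson less_cSupE)
        then show ?thesis using down by auto
      qed
      have "(\<lambda>n. measure P0 (A n)) \<longlonglongrightarrow> measure P0 (\<Union>n. A n)"
      proof (intro finite_Lim_measure_incseq)
        show "range A \<subseteq> sets P0" unfolding A_def by auto
        show "incseq A" unfolding incseq_def A_def
        proof (intro allI impI subsetI)
          fix m n x assume "m \<le> n" "x \<in> {z \<in> space P0. s z \<le> c - 1 / real (Suc m)}"
          moreover have "1 / real (Suc n) \<le> 1 / real (Suc m)" using \<open>m \<le> n\<close>
            by (intro divide_left_mono) auto
          ultimately show "x \<in> {z \<in> space P0. s z \<le> c - 1 / real (Suc n)}" by auto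
        qed
      qed
      moreover have "(\<Union>n. A n) = E"
      proof
        show "(\<Union>n. A n) \<subseteq> E"
        proof
          fix x assume "x \<in> (\<Union>n. A n)"
          then obtain n where "x \<in> space P0" "s x \<le> c - 1 / real (Suc n)" unfolding A_def by auto
          then show "x \<in> E" using down[OF inS[of n]] unfolding E_def S_def by auto
        qed
        show "E \<subseteq> (\<Union>n. A n)"
        proof
          fix x assume x: "x \<in> E"
          then have "s x \<in> S" unfolding E_def S_def by auto
          then have "s x \<le> c" "s x \<noteq> c" using cS by (auto intro: up)
          then have "s x < c" by simp
          then obtain n where "inverse (real (Suc n)) < c - s x"
            using reals_Archimedean[of "c - s x"] by auto
          then have "x \<in> A n" using x unfolding A_def E_def by (auto simp: field_simps)
          then show "x \<in> (\<Union>n. A n)" by blast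
        qed
      qed
      ultimately have lim: "(\<lambda>n. measure P0 (A n)) \<longlonglongrightarrow> measure P0 E" by simp
      have "measure P0 (A n) \<le> u" for n
        using inS[of n] unfolding S_def A_def cdfo_def by simp
      then have "measure P0 E \<le> u" using lim by (intro LIMSEQ_le_const2) auto
      then show ?thesis unfolding E_def .
    qed
  qed
qed

end

theorem proposition4:
  fixes P0 :: "'a::euclidean_space measure" and s :: "'a \<Rightarrow> real"
    and t_CS \<alpha> :: real and m :: nat
  assumes "prob_space P0" and "sets P0 = sets borel"
    and "s \<in> borel_measurable P0"
    and "m \<ge> 1" and "0 < \<alpha>" and "\<alpha> < 1"
  defines "F \<equiv> (\<lambda>x. measure P0 {z \<in> space P0. s z \<le> x})"
    and "Pm \<equiv> PiM {..<m} (\<lambda>_. P0)"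
    and "T \<equiv> (\<lambda>\<omega> i. s (\<omega> i))"
    and "phi_ks \<equiv> (\<lambda>\<omega>. thresh_classifier s (order_stat (\<lambda>i. s (\<omega> i)) m (kstar (\<lambda>i. s (\<omega> i)) m t_CS)))"
  shows "(\<forall>\<omega>\<in>space Pm. order_stat (T \<omega>) m 1 \<le> t_CS \<longrightarrow>
            R0 P0 (phi_ks \<omega>) \<ge> R0 P0 (thresh_classifier s t_CS))
       \<and> (t_CS < gen_inv F (1 - \<alpha>) \<longrightarrow>
            (\<forall>\<omega>\<in>space Pm. order_stat (T \<omega>) m 1 \<le> t_CS \<longrightarrow> R0 P0 (phi_ks \<omega>) > \<alpha>))
       \<and> (t_CS \<ge> gen_inv F (1 - \<alpha>) \<longrightarrow>
            {\<omega> \<in> space Pm. order_stat (T \<omega>) m 1 \<le> t_CS \<and> R0 P0 (phi_ks \<omega>) > \<alpha>} \<in> sets Pm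
          \<and> measure Pm {\<omega> \<in> space Pm. order_stat (T \<omega>) m 1 \<le> t_CS \<and> R0 P0 (phi_ks \<omega>) > \<alpha>}
              \<le> (2 - \<alpha> - F t_CS) ^ m - (1 - F t_CS) ^ m)"
proof -
  interpret P: prob_space P0 by (rule assms(1))
  note sm[measurable] = assms(3)
  have Fc: "F = cdfo P0 s" by (simp add: F_def cdfo_def fun_eq_iff)
  define u where "u = 1 - \<alpha>"
  have u: "0 < u" "u < 1" using assms unfolding u_def by auto
  define Mk where "Mk \<omega> = order_stat (T \<omega>) m (kstar (T \<omega>) m t_CS)" for \<omega>
  have R0k: "R0 P0 (phi_ks \<omega>) = 1 - cdfo P0 s (Mk \<omega>)" for \<omega>
    unfolding phi_ks_def Mk_def T_def using R0_thresh[OF assms(1,3)] by simp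
  have R0t: "R0 P0 (thresh_classifier s t_CS) = 1 - cdfo P0 s t_CS"
    using R0_thresh[OF assms(1,3)] by simp
  have Mk: "Mk \<omega> \<le> t_CS" "\<exists>i<m. s (\<omega> i) = Mk \<omega>"
    "\<forall>i<m. s (\<omega> i) \<le> t_CS \<longrightarrow> s (\<omega> i) \<le> Mk \<omega>"
    if "order_stat (T \<omega>) m 1 \<le> t_CS" for \<omega>
    using oskstar[OF assms(4) that] unfolding Mk_def T_def by auto
  have part1: "\<forall>\<omega>\<in>space Pm. order_stat (T \<omega>) m 1 \<le> t_CS \<longrightarrow>
            R0 P0 (phi_ks \<omega>) \<ge> R0 P0 (thresh_classifier s t_CS)"
    using Mk(1) cdfo_mono[OF assms(1,3)] unfolding R0k R0t by fastforce
  have part2: "t_CS < gen_inv F (1 - \<alpha>) \<longrightarrow>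
            (\<forall>\<omega>\<in>space Pm. order_stat (T \<omega>) m 1 \<le> t_CS \<longrightarrow> R0 P0 (phi_ks \<omega>) > \<alpha>)"
  proof (intro impI ballI)
    fix \<omega> assume h: "t_CS < gen_inv F (1 - \<alpha>)" "order_stat (T \<omega>) m 1 \<le> t_CS"
    have "cdfo P0 s t_CS < u" using gen_inv_lt[OF assms(1,3)] h(1) u unfolding Fc u_def by blast
    moreover have "cdfo P0 s (Mk \<omega>) \<le> cdfo P0 s t_CS" using Mk(1)[OF h(2)] cdfo_mono[OF assms(1,3)] by blast
    ultimately show "R0 P0 (phi_ks \<omega>) > \<alpha>" unfolding R0k u_def by simp
  qed
  define A' where "A' = {x \<in> space P0. s x \<le> t_CS \<and> cdfo P0 s (s x) < u}"
  define C where "C = {x \<in> space P0. t_CS < s x}"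
  have A'm[measurable]: "A' \<in> sets P0" unfolding A'_def using cdfo_meas[OF assms(1,3)] by measurable
  have Cm[measurable]: "C \<in> sets P0" unfolding C_def by measurable
  have spm: "space Pm = PiE {..<m} (\<lambda>_. space P0)" unfolding Pm_def by (simp add: space_PiM)
  have cond: "(order_stat (T \<omega>) m 1 \<le> t_CS \<and> R0 P0 (phi_ks \<omega>) > \<alpha>) \<longleftrightarrow>
     ((\<exists>i<m. s (\<omega> i) \<le> t_CS) \<and> (\<forall>i<m. s (\<omega> i) \<le> t_CS \<longrightarrow> cdfo P0 s (s (\<omega> i)) < u))" for \<omega>
  proof
    assume h: "order_stat (T \<omega>) m 1 \<le> t_CS \<and> R0 P0 (phi_ks \<omega>) > \<alpha>"
    have lt: "cdfo P0 s (Mk \<omega>) < u" using h unfolding R0k u_def by simp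
    have "\<exists>i<m. s (\<omega> i) \<le> t_CS" using h os1[OF assms(4), of "\<lambda>i. s (\<omega> i)" t_CS] unfolding T_def by blast
    moreover have "\<forall>i<m. s (\<omega> i) \<le> t_CS \<longrightarrow> cdfo P0 s (s (\<omega> i)) < u"
    proof (intro allI impI)
      fix i assume "i < m" "s (\<omega> i) \<le> t_CS"
      then have "s (\<omega> i) \<le> Mk \<omega>" using Mk(3) h by blast
      then show "cdfo P0 s (s (\<omega> i)) < u" using lt cdfo_mono[OF assms(1,3)] by (meson le_less_trans)
    qed
    ultimately show "(\<exists>i<m. s (\<omega> i) \<le> t_CS) \<and> (\<forall>i<m. s (\<omega> i) \<le> t_CS \<longrightarrow> cdfo P0 s (s (\<omega> i)) < u)" ..
  next
    assume h: "(\<exists>i<m. s (\<omega> i) \<le> t_CS) \<and> (\<forall>i<m. s (\<omega> i) \<le> t_CS \<longrightarrow> cdfo P0 s (s (\<omega> i)) < u)"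
    then have o1: "order_stat (T \<omega>) m 1 \<le> t_CS" using os1[OF assms(4), of "\<lambda>i. s (\<omega> i)" t_CS] unfolding T_def by blast
    then obtain i where "i < m" "s (\<omega> i) = Mk \<omega>" using Mk(2) by blast
    moreover have "Mk \<omega> \<le> t_CS" using Mk(1) o1 by blast
    ultimately have "cdfo P0 s (Mk \<omega>) < u" using h by metis
    then show "order_stat (T \<omega>) m 1 \<le> t_CS \<and> R0 P0 (phi_ks \<omega>) > \<alpha>" using o1 unfolding R0k u_def by simp
  qed
  have seteq: "{\<omega> \<in> space Pm. order_stat (T \<omega>) m 1 \<le> t_CS \<and> R0 P0 (phi_ks \<omega>) > \<alpha>}
     = PiE {..<m} (\<lambda>_. A' \<union> C) - PiE {..<m} (\<lambda>_. C)"
  proof -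
    have e1: "\<omega> \<in> PiE {..<m} (\<lambda>_. A' \<union> C) \<longleftrightarrow> \<omega> \<in> PiE {..<m} (\<lambda>_. space P0) \<and>
      (\<forall>i<m. s (\<omega> i) \<le> t_CS \<longrightarrow> cdfo P0 s (s (\<omega> i)) < u)" for \<omega>
      unfolding A'_def C_def PiE_iff by auto
    have e2: "\<omega> \<in> PiE {..<m} (\<lambda>_. space P0) \<Longrightarrow> \<omega> \<notin> PiE {..<m} (\<lambda>_. C) \<longleftrightarrow> (\<exists>i<m. s (\<omega> i) \<le> t_CS)" for \<omega>
      unfolding C_def PiE_iff by (auto simp: not_less)
    show ?thesis
    proof (intro equalityI subsetI)
      fix \<omega> assume "\<omega> \<in> {\<omega> \<in> space Pm. order_stat (T \<omega>) m 1 \<le> t_CS \<and> R0 P0 (phi_ks \<omega>) > \<alpha>}"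
      then have a: "\<omega> \<in> space Pm" and b: "order_stat (T \<omega>) m 1 \<le> t_CS \<and> R0 P0 (phi_ks \<omega>) > \<alpha>"
        by blast+
      from b have "(\<exists>i<m. s (\<omega> i) \<le> t_CS) \<and> (\<forall>i<m. s (\<omega> i) \<le> t_CS \<longrightarrow> cdfo P0 s (s (\<omega> i)) < u)"
        using cond[of \<omega>] by blast
      moreover have "\<omega> \<in> PiE {..<m} (\<lambda>_. space P0)" using a spm by simp
      ultimately have "\<omega> \<in> PiE {..<m} (\<lambda>_. space P0)" "(\<exists>i<m. s (\<omega> i) \<le> t_CS)"
        "(\<forall>i<m. s (\<omega> i) \<le> t_CS \<longrightarrow> cdfo P0 s (s (\<omega> i)) < u)" by blast+
      then have x1: "\<omega> \<in> PiE {..<m} (\<lambda>_. A' \<union> C)" and x2: "\<omega> \<notin> PiE {..<m} (\<lambda>_. C)"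
        using e1[of \<omega>] e2[of \<omega>] by simp_all
      from x1 x2 show "\<omega> \<in> PiE {..<m} (\<lambda>_. A' \<union> C) - PiE {..<m} (\<lambda>_. C)" by (rule DiffI)
    next
      fix \<omega> assume h: "\<omega> \<in> PiE {..<m} (\<lambda>_. A' \<union> C) - PiE {..<m} (\<lambda>_. C)"
      then have "\<omega> \<in> PiE {..<m} (\<lambda>_. space P0)" "(\<forall>i<m. s (\<omega> i) \<le> t_CS \<longrightarrow> cdfo P0 s (s (\<omega> i)) < u)"
        using e1[of \<omega>] by simp_all
      moreover then have "\<exists>i<m. s (\<omega> i) \<le> t_CS" using e2[of \<omega>] h by simp
      ultimately have "\<omega> \<in> space Pm" "order_stat (T \<omega>) m 1 \<le> t_CS \<and> R0 P0 (phi_ks \<omega>) > \<alpha>"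
        using cond[of \<omega>] spm by blast+
      then show "\<omega> \<in> {\<omega> \<in> space Pm. order_stat (T \<omega>) m 1 \<le> t_CS \<and> R0 P0 (phi_ks \<omega>) > \<alpha>}"
        by blast
    qed
  qed
  interpret PP: finite_product_prob_space "\<lambda>_. P0" "{..<m}"
    by unfold_locales auto
  have s1: "PiE {..<m} (\<lambda>_. A' \<union> C) \<in> sets Pm" unfolding Pm_def
    by (intro sets_PiM_I_finite) auto
  have s2: "PiE {..<m} (\<lambda>_. C) \<in> sets Pm" unfolding Pm_def
    by (intro sets_PiM_I_finite) auto
  have meas: "measure Pm (PiE {..<m} (\<lambda>_. A' \<union> C) - PiE {..<m} (\<lambda>_. C))
     = (measure P0 A' + measure P0 C) ^ m - measure P0 C ^ m"
  proof -
    have "measure Pm (PiE {..<m} (\<lambda>_. A' \<union> C) - PiE {..<m} (\<lambda>_. C))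
       = measure Pm (PiE {..<m} (\<lambda>_. A' \<union> C)) - measure Pm (PiE {..<m} (\<lambda>_. C))"
      using s1 s2 unfolding Pm_def
      by (intro PP.finite_measure_Diff) (auto intro: PiE_mono)
    also have "\<dots> = (\<Prod>i\<in>{..<m}. measure P0 (A' \<union> C)) - (\<Prod>i\<in>{..<m}. measure P0 C)"
      unfolding Pm_def by (subst PP.prob_times, simp, subst PP.prob_times, simp, simp)
    also have "measure P0 (A' \<union> C) = measure P0 A' + measure P0 C"
      using A'm Cm by (intro P.finite_measure_Union) (auto simp: A'_def C_def)
    finally show ?thesis by simp
  qed
  have PC: "measure P0 C = 1 - cdfo P0 s t_CS"
  proof -
    have "C = space P0 - {z \<in> space P0. s z \<le> t_CS}" unfolding C_def by auto
    then show ?thesis unfolding cdfo_def using P.prob_compl[OF setle[OF assms(1,3)]] by simp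
  qed
  have PA: "measure P0 A' \<le> u"
  proof -
    have "measure P0 A' \<le> measure P0 {x \<in> space P0. cdfo P0 s (s x) < u}"
      using cdfo_meas[OF assms(1,3)] unfolding A'_def by (intro P.finite_measure_mono) auto
    then show ?thesis using prob_F_lt[OF assms(1,3) u] by simp
  qed
  have ineq: "(measure P0 A' + measure P0 C) ^ m \<le> (u + measure P0 C) ^ m"
    using PA by (intro power_mono) auto
  have part3: "t_CS \<ge> gen_inv F (1 - \<alpha>) \<longrightarrow>
            {\<omega> \<in> space Pm. order_stat (T \<omega>) m 1 \<le> t_CS \<and> R0 P0 (phi_ks \<omega>) > \<alpha>} \<in> sets Pm
          \<and> measure Pm {\<omega> \<in> space Pm. order_stat (T \<omega>) m 1 \<le> t_CS \<and> R0 P0 (phi_ks \<omega>) > \<alpha>}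
              \<le> (2 - \<alpha> - F t_CS) ^ m - (1 - F t_CS) ^ m"
    unfolding seteq meas using s1 s2 ineq unfolding PC Fc u_def
    by (auto simp: algebra_simps)
  show ?thesis using part1 part2 part3 by blast
qed

end
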